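(* Let $\mathcal{K}$ be a convex cone in a finite-dimensional Euclidean space and ${\mathcal F}_t\unlhd\mathcal{K}$ a face. In the procedure ${\mathcal F}_0=\mathcal{K}$, ${\mathcal F}_{i+1}={\mathcal F}_i\cap d_i^{\perp}$ with $d_i\in{\mathcal F}_i^*$, $d_i\notin{\mathcal F}_i^{\perp}$, $d_i\perp{\mathcal F}_t$ (continued until no such $d_i$ exists), choosing at every step $d_i\in\operatorname{ri}\big({\mathcal F}_i^*\cap {\mathcal F}_t^{\perp}\big)$ yields the minimum possible number of steps, i.e., the number of steps equals the singularity degree of ${\mathcal F}_t$ over $\mathcal{K}$.
   Context: The singularity degree of a face ${\mathcal F}_t\unlhd\mathcal{K}$ over $\mathcal{K}$ is the minimum number $d$ of steps of a sequence ${\mathcal F}_0=\mathcal{K}$, ${\mathcal F}_{i+1}={\mathcal F}_i\cap d_i^{\perp}$, with $d_i\in{\mathcal F}_i^*$, $d_i\notin{\mathcal F}_i^\perp$, $d_i\perp{\mathcal F}_t$, such that ${\mathcal F}_d={\mathcal F}_t$. Here $S^*$ is the dual cone, $S^\perp$ the orthogonal complement, $\operatorname{ri}$ the relative interior. *)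

theory Defs
  imports "HOL-Analysis.Analysis"
begin

definition dual_cone :: "'a::real_inner set \<Rightarrow> 'a set" where
  "dual_cone S = {y. \<forall>x\<in>S. 0 \<le> x \<bullet> y}"

definition fr_face :: "'a::real_inner set \<Rightarrow> 'a list \<Rightarrow> nat \<Rightarrow> 'a set" where
  "fr_face K ds i = foldl (\<lambda>F d. F \<inter> orthogonal_comp {d}) K (take i ds)"

definition fr_step :: "'a::real_inner set \<Rightarrow> 'a set \<Rightarrow> 'a \<Rightarrow> bool" where
  "fr_step F Ft d \<longleftrightarrow> d \<in> dual_cone F \<and> d \<notin> orthogonal_comp F \<and> d \<in> orthogonal_comp Ft"

definition fr_seq :: "'a::real_inner set \<Rightarrow> 'a set \<Rightarrow> 'a list \<Rightarrow> bool" where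
  "fr_seq K Ft ds \<longleftrightarrow> (\<forall>i<length ds. fr_step (fr_face K ds i) Ft (ds ! i))"

definition sing_degree :: "'a::real_inner set \<Rightarrow> 'a set \<Rightarrow> nat" where
  "sing_degree K Ft = (LEAST n. \<exists>ds. length ds = n \<and> fr_seq K Ft ds \<and> fr_face K ds n = Ft)"

end

theory Submission
  imports Defs
begin

lemma ri_vanish:
  fixes C :: "'a::euclidean_space set"
  assumes d: "d \<in> rel_interior C" and c: "c \<in> C"
    and nn: "\<And>y. y \<in> C \<Longrightarrow> 0 \<le> x \<bullet> y" and xd: "x \<bullet> d = 0"
  shows "x \<bullet> c = 0"
proof (cases "c = d")
  case True thus ?thesis using xd by simp
next
  case False
  from d obtain e where e: "e > 0" "cball d e \<inter> affine hull C \<subseteq> C" "d \<in> C"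
    by (auto simp: mem_rel_interior_cball)
  define t where "t = e / norm (c - d)"
  have np: "norm (c - d) > 0" using False by simp
  have t: "t > 0" using e np by (simp add: t_def)
  define p where "p = (1 + t) *\<^sub>R d + (- t) *\<^sub>R c"
  have "p \<in> affine hull C"
    unfolding p_def
    by (rule mem_affine[OF affine_affine_hull]) (use e c hull_inc in auto)
  moreover have "dist d p = e"
  proof -
    have "d - p = t *\<^sub>R (c - d)" by (simp add: p_def algebra_simps)
    hence "dist d p = t * norm (c - d)" using t by (simp add: dist_norm)
    thus ?thesis using np by (simp add: t_def)
  qed
  ultimately have "p \<in> C" using e by auto
  hence "0 \<le> x \<bullet> p" by (rule nn)
  also have "x \<bullet> p = - t * (x \<bullet> c)" using xd by (simp add: p_def inner_diff_right inner_add_right)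
  finally have "x \<bullet> c \<le> 0" using t by (simp add: mult_le_0_iff)
  with nn[OF c] show ?thesis by simp
qed

lemma fr_face_Suc:
  "i < length ds \<Longrightarrow> fr_face K ds (Suc i) = fr_face K ds i \<inter> orthogonal_comp {ds ! i}"
  by (simp add: fr_face_def take_Suc_conv_app_nth)

lemma fr_face_ge:
  "length ds \<le> i \<Longrightarrow> fr_face K ds i = fr_face K ds (length ds)"
  by (simp add: fr_face_def)

lemma dual_anti: "A \<subseteq> B \<Longrightarrow> dual_cone B \<subseteq> dual_cone A"
  by (auto simp: dual_cone_def)

theorem mainTheorem3:
  fixes K Ft :: "'a::euclidean_space set" and ds :: "'a list"
  assumes "convex_cone K"
    and "Ft face_of K"
    and "\<exists>es. fr_seq K Ft es \<and> fr_face K es (length es) = Ft"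
    and "fr_seq K Ft ds"
    and "\<forall>i<length ds. ds ! i \<in> rel_interior (dual_cone (fr_face K ds i) \<inter> orthogonal_comp Ft)"
    and "\<not> (\<exists>d. fr_step (fr_face K ds (length ds)) Ft d)"
  shows "fr_face K ds (length ds) = Ft \<and> length ds = sing_degree K Ft"
proof -
  define n where "n = length ds"
  have FtK: "Ft \<subseteq> K" using assms(2) face_of_imp_subset by blast
  have sub: "Ft \<subseteq> fr_face K ds i" for i
  proof (induction i)
    case 0 thus ?case using FtK by (simp add: fr_face_def)
  next
    case (Suc i)
    show ?case
    proof (cases "i < length ds")
      case True
      have "ds ! i \<in> orthogonal_comp Ft" using assms(4) True by (simp add: fr_seq_def fr_step_def)
      hence "Ft \<subseteq> orthogonal_comp {ds ! i}"
        by (auto simp: orthogonal_comp_def orthogonal_def inner_commute)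
      thus ?thesis using Suc True by (simp add: fr_face_Suc)
    next
      case False thus ?thesis using Suc fr_face_ge[of ds i] fr_face_ge[of ds "Suc i"] by simp
    qed
  qed
  have strict: "fr_face K ds j \<subset> fr_face K ds i" if "i < j" "j \<le> n" for i j
    using that
  proof (induction j)
    case 0 thus ?case by simp
  next
    case (Suc j)
    have jl: "j < length ds" using Suc by (simp add: n_def)
    have st: "fr_step (fr_face K ds j) Ft (ds ! j)" using assms(4) jl by (simp add: fr_seq_def)
    then obtain x where x: "x \<in> fr_face K ds j" "\<not> orthogonal x (ds ! j)"
      by (auto simp: fr_step_def orthogonal_comp_def)
    have "x \<notin> fr_face K ds (Suc j)"
      using x jl by (auto simp: fr_face_Suc orthogonal_comp_def orthogonal_def inner_commute)
    hence ss: "fr_face K ds (Suc j) \<subset> fr_face K ds j" using x jl by (auto simp: fr_face_Suc)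
    show ?case
    proof (cases "i = j")
      case True thus ?thesis using ss by simp
    next
      case False thus ?thesis using Suc ss by auto
    qed
  qed
  have cmp: "fr_face K ds (min i n) \<subseteq> fr_face K es i"
    if es: "fr_seq K Ft es" "i \<le> length es" for es i
    using that(2)
  proof (induction i)
    case 0 thus ?case by (simp add: fr_face_def)
  next
    case (Suc i)
    have il: "i < length es" using Suc by simp
    have IH: "fr_face K ds (min i n) \<subseteq> fr_face K es i" using Suc by simp
    have ste: "fr_step (fr_face K es i) Ft (es ! i)" using es il by (simp add: fr_seq_def)
    have dd: "es ! i \<in> dual_cone (fr_face K ds (min i n))" "es ! i \<in> orthogonal_comp Ft"
      using ste dual_anti[OF IH] by (auto simp: fr_step_def)
    have "fr_face K ds (min (Suc i) n) \<subseteq> orthogonal_comp {es ! i}"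
    proof (cases "i < n")
      case True
      hence mi: "min i n = i" "min (Suc i) n = Suc i" by auto
      have il2: "i < length ds" using True n_def by simp
      let ?C = "dual_cone (fr_face K ds i) \<inter> orthogonal_comp Ft"
      have dri: "ds ! i \<in> rel_interior ?C" using assms(5) il2 by simp
      have ec: "es ! i \<in> ?C" using dd mi by simp
      show ?thesis
      proof
        fix x assume xs: "x \<in> fr_face K ds (min (Suc i) n)"
        hence x1: "x \<in> fr_face K ds i" "x \<bullet> ds ! i = 0"
          using mi il2 by (auto simp: fr_face_Suc orthogonal_comp_def orthogonal_def inner_commute)
        have "x \<bullet> es ! i = 0"
          by (rule ri_vanish[OF dri ec]) (use x1 in \<open>auto simp: dual_cone_def\<close>)
        thus "x \<in> orthogonal_comp {es ! i}"
          by (simp add: orthogonal_comp_def orthogonal_def inner_commute)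
      qed
    next
      case False
      hence mi: "min i n = n" "min (Suc i) n = n" by auto
      have "es ! i \<in> orthogonal_comp (fr_face K ds n)"
        using assms(6) dd mi n_def by (auto simp: fr_step_def)
      thus ?thesis using mi
        by (auto simp: orthogonal_comp_def orthogonal_def inner_commute)
    qed
    moreover have "fr_face K ds (min (Suc i) n) \<subseteq> fr_face K ds (min i n)"
    proof (cases "i < n")
      case True thus ?thesis using strict[of i "Suc i"] by auto
    qed auto
    ultimately show ?case using IH il by (auto simp: fr_face_Suc)
  qed
  have le: "n \<le> length es \<and> fr_face K ds n = Ft"
    if es: "fr_seq K Ft es" "fr_face K es (length es) = Ft" for es
  proof -
    have c1: "fr_face K ds (min (length es) n) \<subseteq> Ft" using cmp[OF es(1), of "length es"] es(2) by simp
    have "n \<le> length es"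
    proof (rule ccontr)
      assume "\<not> ?thesis"
      hence "fr_face K ds n \<subset> fr_face K ds (length es)" using strict[of "length es" n] by simp
      moreover have "min (length es) n = length es" using \<open>\<not> n \<le> length es\<close> by simp
      ultimately show False using c1 sub[of n] by auto
    qed
    thus ?thesis using c1 sub[of n] by auto
  qed
  obtain es where es: "fr_seq K Ft es" "fr_face K es (length es) = Ft" using assms(3) by blast
  have fin: "fr_face K ds n = Ft" using le[OF es] by simp
  have "sing_degree K Ft = n"
    unfolding sing_degree_def
  proof (rule Least_equality)
    show "\<exists>ds'. length ds' = n \<and> fr_seq K Ft ds' \<and> fr_face K ds' n = Ft"
      using fin assms(4) n_def by blast
  next
    fix m assume "\<exists>ds'. length ds' = m \<and> fr_seq K Ft ds' \<and> fr_face K ds' m = Ft"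
    then obtain e where "length e = m" "fr_seq K Ft e" "fr_face K e m = Ft" by blast
    thus "n \<le> m" using le[of e] by simp
  qed
  thus ?thesis using fin n_def by simp
qed

end
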